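(* Let $V$ be a finite dimensional vector space over $\mathbb{R}$. A finite subset $A$ of $V$ generates a dense subsemigroup of the additive group $V$ if and only if the following two conditions hold: (a) the convex hull of $A$ contains $0$ in its interior; (b) the zero form is the only $\mathbb{R}$-linear form $l$ on $V$ with $l(A)\subset\mathbb{Z}$. *)

theory Defs
  imports "HOL-Analysis.Analysis"
begin

inductive_set add_subsemigroup_gen :: "'a::plus set \<Rightarrow> 'a set" for A :: "'a set" where
  gen: "x \<in> A \<Longrightarrow> x \<in> add_subsemigroup_gen A"
| add: "x \<in> add_subsemigroup_gen A \<Longrightarrow> y \<in> add_subsemigroup_gen A \<Longrightarrow> x + y \<in> add_subsemigroup_gen A"

end

theory Submission
  imports Defs "HOL-Analysis.Analysis"
begin

lemma sg_induct_set:
  assumes "A \<subseteq> P" "\<And>x y. x \<in> P \<Longrightarrow> y \<in> P \<Longrightarrow> x + y \<in> P"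
  shows "add_subsemigroup_gen A \<subseteq> P"
proof
  fix x assume "x \<in> add_subsemigroup_gen A"
  then show "x \<in> P" by induct (use assms in auto)
qed

lemma halfspace_exists:
  fixes C :: "'a::euclidean_space set"
  assumes "convex C" "0 \<notin> interior C"
  shows "\<exists>v. v \<noteq> 0 \<and> (\<forall>x\<in>C. 0 \<le> v \<bullet> x)"
proof (cases "interior C = {}")
  case True
  show ?thesis
  proof (cases "C = {}")
    case True
    obtain b :: 'a where "b \<in> Basis" using nonempty_Basis by blast
    then have "b \<noteq> 0" by auto
    then show ?thesis using True by blast
  next
    case False
    have "aff_dim C \<noteq> int DIM('a)"
      using True False interior_rel_interior_gen[of C] rel_interior_eq_empty[OF assms(1)] by auto
    then have "aff_dim C < DIM('a)" using aff_dim_le_DIM[of C] by linarith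
    then obtain a b where ab: "a \<noteq> 0" "C \<subseteq> {x. a \<bullet> x = b}" by (rule aff_lowdim_subset_hyperplane)
    show ?thesis
    proof (cases "b \<ge> 0")
      case True then show ?thesis using ab by (intro exI[of _ a]) auto
    next
      case False then show ?thesis using ab by (intro exI[of _ "-a"]) auto
    qed
  qed
next
  case False
  obtain v where v: "v \<noteq> 0" "\<forall>x\<in>interior C. 0 \<le> inner v x"
    using separating_hyperplane_set_0[OF convex_interior[OF assms(1)] assms(2)] by blast
  have "closure (interior C) \<subseteq> {x. 0 \<le> inner v x}"
    by (rule closure_minimal) (use v closed_halfspace_ge[of 0 v] in auto)
  then have "C \<subseteq> {x. 0 \<le> inner v x}"
    using convex_closure_interior[OF assms(1) False] closure_subset by blast
  then show ?thesis using v by auto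
qed

lemma dense_imp_a:
  fixes A :: "'a::euclidean_space set"
  assumes "closure (add_subsemigroup_gen A) = UNIV"
  shows "0 \<in> interior (convex hull A)"
proof (rule ccontr)
  assume "0 \<notin> interior (convex hull A)"
  then obtain v where v: "v \<noteq> 0" "\<forall>x\<in>convex hull A. 0 \<le> v \<bullet> x"
    using halfspace_exists[OF convex_convex_hull] by blast
  have "add_subsemigroup_gen A \<subseteq> {x. 0 \<le> v \<bullet> x}"
    by (rule sg_induct_set) (use v hull_subset[of A convex] in \<open>auto simp: inner_add_right\<close>)
  then have "closure (add_subsemigroup_gen A) \<subseteq> {x. 0 \<le> v \<bullet> x}"
    by (intro closure_minimal) (auto intro: closed_halfspace_ge[of 0 v, simplified])
  then have "0 \<le> v \<bullet> (-v)" using assms by blast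
  moreover have "0 < v \<bullet> v" using v by simp
  ultimately show False by (simp add: inner_minus_right)
qed

lemma dense_imp_b:
  fixes A :: "'a::euclidean_space set"
    and l :: "'a \<Rightarrow> real"
  assumes "closure (add_subsemigroup_gen A) = UNIV" "linear l" "l ` A \<subseteq> \<int>"
  shows "l = (\<lambda>x. 0)"
proof -
  have "add_subsemigroup_gen A \<subseteq> {x. l x \<in> \<int>}"
    by (rule sg_induct_set) (use assms in \<open>auto simp: linear_add\<close>)
  then have sub: "l ` add_subsemigroup_gen A \<subseteq> \<int>" by auto
  have cont: "continuous_on (closure (add_subsemigroup_gen A)) l"
    using assms(2) by (simp add: linear_continuous_on linear_conv_bounded_linear)
  have allint: "l x \<in> \<int>" for x
    using image_closure_subset[OF cont closed_Ints sub] assms(1) by auto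
  show ?thesis
  proof
    fix x show "l x = 0"
    proof (rule ccontr)
      assume ne: "l x \<noteq> 0"
      have "l ((1 / (2 * l x)) *\<^sub>R x) = 1/2"
        using ne by (simp add: linear_scale[OF assms(2)])
      then have "(1/2::real) \<in> \<int>" using allint by metis
      then obtain n :: int where "1/2 = (of_int n :: real)" by (auto elim: Ints_cases)
      then have "1 = 2 * (of_int n :: real)" by linarith
      then have "1 = 2 * n" by linarith
      then show False by presburger
    qed
  qed
qed

locale cgrp =
  fixes G :: "'a::euclidean_space set"
  assumes cl: "closed G" and z: "0 \<in> G" and ad: "\<And>x y. x \<in> G \<Longrightarrow> y \<in> G \<Longrightarrow> x + y \<in> G"
    and ng: "\<And>x. x \<in> G \<Longrightarrow> -x \<in> G"
begin

lemma df: "x \<in> G \<Longrightarrow> y \<in> G \<Longrightarrow> x - y \<in> G"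
  using ad ng by (metis diff_conv_add_uminus)

lemma natm: "x \<in> G \<Longrightarrow> of_nat k *\<^sub>R x \<in> G"
  by (induction k) (auto simp: z algebra_simps ad)

lemma intm: assumes "x \<in> G" shows "of_int k *\<^sub>R x \<in> G"
proof (cases "k \<ge> 0")
  case True
  then have "of_int k = (of_nat (nat k) :: real)" by simp
  then show ?thesis using natm assms by (metis)
next
  case False
  then have "of_int k = - (of_nat (nat (-k)) :: real)" by simp
  then show ?thesis using natm ng assms by (metis scaleR_minus_left)
qed

lemma sm: "finite I \<Longrightarrow> (\<And>i. i \<in> I \<Longrightarrow> g i \<in> G) \<Longrightarrow> sum g I \<in> G"
  by (induction I rule: finite_induct) (auto simp: z ad)

lemma dual:
  assumes nU: "G \<noteq> UNIV"
  shows "\<exists>l. linear l \<and> l \<noteq> (\<lambda>x. 0::real) \<and> (\<forall>x\<in>G. l x \<in> \<int>)"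
proof -
  define W where "W = {x. \<forall>t. t *\<^sub>R x \<in> G}"
  have WG: "W \<subseteq> G" unfolding W_def by (auto, metis scaleR_one)
  have subW: "subspace W" unfolding subspace_def W_def
    by (auto simp: z scaleR_add_right ad)
  obtain B0 where B0: "B0 \<subseteq> W" "independent B0" "W \<subseteq> span B0"
    by (rule maximal_independent_subset)
  have spB0: "span B0 = W" using span_minimal[OF B0(1) subW] B0(3) by auto
  obtain B where B: "B0 \<subseteq> B" "B \<subseteq> B0 \<union> G" "independent B" "B0 \<union> G \<subseteq> span B"
    by (rule maximal_independent_subset_extend[of B0 "B0 \<union> G"]) (use B0 in auto)
  have finB: "finite B" using independent_bound[OF B(3)] by auto
  define H where "H = B - B0"
  have HG: "H \<subseteq> G" using B H_def by auto
  show ?thesis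
  proof (cases "H = {}")
    case True
    then have "B = B0" using B(1) H_def by auto
    then have GW: "G = W" using B(4) spB0 WG by auto
    have "span W = W" using spB0 span_span by metis
    then have "span W \<noteq> UNIV" using GW nU by metis
    then have dW: "dim W < DIM('a)" using dim_eq_full[of W] dim_subset_UNIV[of W] by linarith
    then obtain v :: 'a where v: "v \<noteq> 0" "\<And>y. y \<in> span W \<Longrightarrow> orthogonal v y"
      using orthogonal_to_subspace_exists[OF dW] by blast
    show ?thesis
    proof (intro exI[of _ "\<lambda>x. v \<bullet> x"] conjI)
      show "linear (\<lambda>x. v \<bullet> x)" by (rule linearI) (auto simp: inner_add_right)
      show "(\<lambda>x. v \<bullet> x) \<noteq> (\<lambda>x. 0)"
      proof
        assume "(\<lambda>x. v \<bullet> x) = (\<lambda>x. 0)"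
        then have "v \<bullet> v = 0" by metis
        then show False using v by simp
      qed
      show "\<forall>x\<in>G. v \<bullet> x \<in> \<int>" using v(2) span_superset[of W] GW by (auto simp: orthogonal_def)
    qed
  next
    case False
    then obtain h where h: "h \<in> H" by auto
    define cf where "cf b = (SOME g. linear g \<and> (\<forall>x\<in>B. g x = (if x = b then 1 else (0::real))))" for b
    have cf: "linear (cf b) \<and> (\<forall>x\<in>B. cf b x = (if x = b then 1 else 0))" for b
      unfolding cf_def by (rule someI_ex[OF linear_independent_extend[OF B(3), of "\<lambda>x. if x = b then 1 else (0::real)"]])
    have cflin: "linear (cf b)" for b using cf by blast
    have cfB: "x \<in> B \<Longrightarrow> cf b x = (if x = b then 1 else 0)" for x b using cf by blast
    have lin0: "linear (\<lambda>_::'a. 0::real)" by (rule linearI) auto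
    have linid: "linear (\<lambda>x::'a. x)" by (rule linearI) auto
    have rep: "y = (\<Sum>b\<in>B. cf b y *\<^sub>R b)" if y: "y \<in> span B" for y
    proof -
      have "linear (\<lambda>y. \<Sum>b\<in>B. cf b y *\<^sub>R b)"
        by (rule linearI) (auto simp: linear_add[OF cflin] linear_scale[OF cflin] scaleR_add_left sum.distrib scaleR_sum_right)
      moreover have "x = (\<Sum>b\<in>B. cf b x *\<^sub>R b)" if "x \<in> B" for x
      proof -
        have "(\<Sum>b\<in>B. cf b x *\<^sub>R b) = (\<Sum>b\<in>B. if x = b then b else 0)"
          using that by (intro sum.cong) (auto simp: cfB)
        also have "\<dots> = x" using finB that by simp
        finally show ?thesis by simp
      qed
      ultimately show ?thesis
        using real_vector.linear_eq_on_span[OF linid, of "\<lambda>y. \<Sum>b\<in>B. cf b y *\<^sub>R b" B y] y by blast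
    qed
    have van: "cf b x = 0" if "x \<in> span X" "\<And>z. z \<in> X \<Longrightarrow> cf b z = 0" for x X b
      using real_vector.linear_eq_on_span[OF cflin[of b] lin0, of X x] that by blast
    have inter0: "x = 0" if x: "x \<in> span B0" "x \<in> span H" for x
    proof -
      have cz: "cf b x = 0" if "b \<in> B" for b
      proof (cases "b \<in> B0")
        case True
        show ?thesis
          by (rule van[OF x(2)]) (use True cfB H_def in auto)
      next
        case False
        show ?thesis
          by (rule van[OF x(1)]) (use False cfB B(1) in auto)
      qed
      have "x \<in> span B" using x(1) B(1) span_mono by blast
      then have "x = (\<Sum>b\<in>B. cf b x *\<^sub>R b)" by (rule rep)
      also have "\<dots> = 0" using cz by (intro sum.neutral) simp
      finally show "x = 0" .
    qed
    define r where "r y = (\<Sum>b\<in>H. frac (cf b y) *\<^sub>R b)" for y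
    have finH: "finite H" using finB H_def by auto
    have BH: "B = B0 \<union> H" "B0 \<inter> H = {}" using B(1) H_def by auto
    have rG: "r y \<in> G" if y: "y \<in> G" for y
    proof -
      have ysp: "y \<in> span B" using y B(4) by auto
      define s0 where "s0 = (\<Sum>b\<in>B0. cf b y *\<^sub>R b)"
      define s1 where "s1 = (\<Sum>b\<in>H. cf b y *\<^sub>R b)"
      define s2 where "s2 = (\<Sum>b\<in>H. of_int \<lfloor>cf b y\<rfloor> *\<^sub>R b)"
      have "(\<Sum>b\<in>B. cf b y *\<^sub>R b) = s0 + s1"
        unfolding BH(1) s0_def s1_def by (rule sum.union_disjoint) (use finB BH in auto)
      then have ys: "y = s0 + s1"
        using rep[OF ysp] by argo
      have s1r: "s1 = s2 + r y"
        unfolding r_def s1_def s2_def sum.distrib[symmetric] by (intro sum.cong) (auto simp: frac_def algebra_simps)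
      have "y - s0 - s2 = s1 - s2" using ys by (simp add: algebra_simps)
      also have "\<dots> = r y" using s1r by simp
      finally have eq: "r y = y - s0 - s2" by simp
      have "s0 \<in> span B0" unfolding s0_def
        by (intro span_sum span_scale span_base)
      then have s1: "s0 \<in> G" using spB0 WG by auto
      have s2: "s2 \<in> G" unfolding s2_def
        by (rule sm[OF finH], rule intm) (use HG in auto)
      show ?thesis unfolding eq by (intro df y s1 s2)
    qed
    have rspan: "r y \<in> span H" for y unfolding r_def by (intro span_sum span_scale span_base)
    define R where "R = (\<Sum>b\<in>H. norm b)"
    have rnorm: "norm (r y) \<le> R" for y
    proof -
      have "norm (r y) \<le> (\<Sum>b\<in>H. norm (frac (cf b y) *\<^sub>R b))" unfolding r_def by (rule norm_sum)
      also have "\<dots> \<le> R" unfolding R_def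
      proof (rule sum_mono)
        fix b
        have "\<bar>frac (cf b y)\<bar> \<le> 1" using frac_ge_0 frac_lt_1 by (metis abs_of_nonneg less_imp_le)
        then show "norm (frac (cf b y) *\<^sub>R b) \<le> norm b"
          by (simp add: mult_left_le_one_le)
      qed
      finally show ?thesis .
    qed
    have rc: "cf h (r y) = frac (cf h y)" for y
    proof -
      have "cf h (r y) = (\<Sum>b\<in>H. frac (cf b y) * cf h b)"
        unfolding r_def by (simp add: linear_sum[OF cflin] linear_scale[OF cflin])
      also have "\<dots> = (\<Sum>b\<in>H. if b = h then frac (cf b y) else 0)"
        using H_def cfB by (intro sum.cong) auto
      also have "\<dots> = frac (cf h y)" using finH h by simp
      finally show ?thesis .
    qed
    have disc: "\<exists>\<delta>>0. \<forall>x\<in>G \<inter> span H. x \<noteq> 0 \<longrightarrow> \<delta> \<le> norm x"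
    proof (rule ccontr)
      assume nd: "\<not> ?thesis"
      have "\<exists>x. x \<in> G \<and> x \<in> span H \<and> x \<noteq> 0 \<and> norm x < inverse (real (Suc k))" for k :: nat
      proof -
        have p: "inverse (real (Suc k)) > 0" by simp
        from nd have "\<forall>\<delta>>0. \<exists>x\<in>G \<inter> span H. x \<noteq> 0 \<and> norm x < \<delta>" by (auto simp: not_le)
        from this[rule_format, OF p] show ?thesis by blast
      qed
      then obtain x where x: "\<And>k. x k \<in> G" "\<And>k. x k \<in> span H" "\<And>k. x k \<noteq> 0"
          "\<And>k. norm (x k) < inverse (real (Suc k))" by metis
      define u where "u k = x k /\<^sub>R norm (x k)" for k
      have uK: "u k \<in> sphere 0 1 \<inter> span H" for k
        using x(2,3)[of k] by (auto simp: u_def span_scale)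
      have cK: "compact (sphere 0 (1::real) \<inter> span H)"
        by (intro compact_Int_closed compact_sphere closed_span)
      obtain u0 rr where u0: "u0 \<in> sphere 0 1 \<inter> span H" "strict_mono rr" "(u \<circ> rr) \<longlonglongrightarrow> u0"
        using seq_compactE[OF compact_imp_seq_compact[OF cK], of u] uK by blast
      have x0: "(\<lambda>k. x (rr k)) \<longlonglongrightarrow> 0"
      proof (rule Lim_null_comparison)
        have "norm (x (rr k)) \<le> inverse (real (Suc k))" for k
        proof -
          have "k \<le> rr k" using seq_suble[OF u0(2)] by blast
          then have "inverse (real (Suc (rr k))) \<le> inverse (real (Suc k))"
            by (intro le_imp_inverse_le) auto
          then show ?thesis using x(4)[of "rr k"] by linarith
        qed
        then show "\<forall>\<^sub>F k in sequentially. norm (x (rr k)) \<le> inverse (real (Suc k))" by simp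
        show "(\<lambda>k. inverse (real (Suc k))) \<longlonglongrightarrow> 0" by (rule LIMSEQ_inverse_real_of_nat)
      qed
      have "u0 \<in> W" unfolding W_def
      proof (intro CollectI allI)
        fix t :: real
        define z where "z k = of_int \<lfloor>t / norm (x (rr k))\<rfloor> *\<^sub>R x (rr k)" for k
        define e where "e k = (of_int \<lfloor>t / norm (x (rr k))\<rfloor> - t / norm (x (rr k))) *\<^sub>R x (rr k)" for k
        have zG: "z k \<in> G" for k unfolding z_def by (rule intm[OF x(1)])
        have zeq: "z k = t *\<^sub>R (u \<circ> rr) k + e k" for k
          using x(3)[of "rr k"] by (simp add: z_def e_def u_def algebra_simps divide_inverse)
        have e0: "e \<longlonglongrightarrow> 0"
        proof (rule Lim_null_comparison)
          have "norm (e k) \<le> norm (x (rr k))" for k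
          proof -
            have "\<bar>of_int \<lfloor>t / norm (x (rr k))\<rfloor> - t / norm (x (rr k))\<bar> \<le> 1"
              by linarith
            then show ?thesis unfolding e_def by (simp add: mult_left_le_one_le)
          qed
          then show "\<forall>\<^sub>F k in sequentially. norm (e k) \<le> norm (x (rr k))" by simp
          show "(\<lambda>k. norm (x (rr k))) \<longlonglongrightarrow> 0" using x0 tendsto_norm_zero by blast
        qed
        have "(\<lambda>k. t *\<^sub>R (u \<circ> rr) k + e k) \<longlonglongrightarrow> t *\<^sub>R u0 + 0"
          by (intro tendsto_intros u0(3) e0)
        moreover have zf: "z = (\<lambda>k. t *\<^sub>R (u \<circ> rr) k + e k)" by (rule ext) (rule zeq)
        ultimately have "z \<longlonglongrightarrow> t *\<^sub>R u0" by simp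
        then show "t *\<^sub>R u0 \<in> G" using cl zG closed_sequential_limits by blast
      qed
      then have "u0 \<in> span B0" using spB0 by simp
      then have "u0 = 0" using inter0 u0(1) by blast
      then show False using u0(1) by simp
    qed
    then obtain \<delta> where \<delta>: "\<delta> > 0" "\<And>x. x \<in> G \<Longrightarrow> x \<in> span H \<Longrightarrow> x \<noteq> 0 \<Longrightarrow> \<delta> \<le> norm x"
      by blast
    define F where "F = G \<inter> span H \<inter> cball 0 R"
    have finF: "finite F"
    proof (rule ccontr)
      assume inf: "infinite F"
      obtain p where "p islimpt F"
        using Heine_Borel_imp_Bolzano_Weierstrass[OF compact_cball inf, of 0 R] F_def by blast
      then have ap: "\<And>e. e > 0 \<Longrightarrow> \<exists>x'\<in>F. x' \<noteq> p \<and> dist x' p < e"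
        by (simp add: islimpt_approachable)
      obtain x1 where x1: "x1 \<in> F" "x1 \<noteq> p" "dist x1 p < \<delta>/2" using ap[of "\<delta>/2"] \<delta> by auto
      obtain x2 where x2: "x2 \<in> F" "x2 \<noteq> p" "dist x2 p < dist x1 p" using ap[of "dist x1 p"] x1 by auto
      have ne: "x1 - x2 \<noteq> 0" using x2 by auto
      have "x1 - x2 \<in> G" using x1 x2 df F_def by auto
      moreover have "x1 - x2 \<in> span H" using x1 x2 F_def span_diff by auto
      moreover have "norm (x1 - x2) < \<delta>"
        using x1 x2 dist_triangle2[of x1 x2 p] by (simp add: dist_norm)
      ultimately show False using \<delta>(2) ne by force
    qed
    define N :: nat where "N = fact (card F)"
    have key: "real N * cf h x \<in> \<int>" if xG: "x \<in> G" for x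
    proof -
      define \<phi> where "\<phi> k = r (real k *\<^sub>R x)" for k :: nat
      have "\<phi> ` {..card F} \<subseteq> F" using rG natm xG rspan rnorm by (auto simp: \<phi>_def F_def)
      then have "card (\<phi> ` {..card F}) \<le> card F" by (rule card_mono[OF finF])
      then have "card (\<phi> ` {..card F}) < card {..card F}" by simp
      then have "\<not> inj_on \<phi> {..card F}" by (rule pigeonhole)
      then obtain a b where ab: "a \<le> card F" "b \<le> card F" "a \<noteq> b" "\<phi> a = \<phi> b"
        unfolding inj_on_def by auto
      define j where "j = min a b"
      define k where "k = max a b"
      have jk: "j \<le> card F" "k \<le> card F" "j < k" "\<phi> j = \<phi> k"
        using ab by (auto simp: j_def k_def min_def max_def)
      have "cf h (\<phi> j) = cf h (\<phi> k)" using jk(4) by simp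
      then have "frac (cf h (real j *\<^sub>R x)) = frac (cf h (real k *\<^sub>R x))" unfolding \<phi>_def rc .
      then have fe: "frac (real j * cf h x) = frac (real k * cf h x)"
        by (simp add: linear_scale[OF cflin])
      have "real k * cf h x - real j * cf h x = of_int \<lfloor>real k * cf h x\<rfloor> - of_int \<lfloor>real j * cf h x\<rfloor>"
        using fe unfolding frac_def by linarith
      then have "real k * cf h x - real j * cf h x \<in> \<int>"
        by (metis Ints_of_int of_int_diff)
      then have m: "real (k - j) * cf h x \<in> \<int>" using jk(3) by (simp add: of_nat_diff left_diff_distrib)
      have "(k - j) dvd N" unfolding N_def using jk by (intro dvd_fact) auto
      then obtain q where "N = (k - j) * q" by blast
      then have "real N * cf h x = real q * (real (k - j) * cf h x)" by simp
      moreover have "real q * (real (k - j) * cf h x) \<in> \<int>"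
        by (rule Ints_mult[OF Ints_of_nat m])
      ultimately show ?thesis by (simp only:)
    qed
    show ?thesis
    proof (intro exI[of _ "\<lambda>y. real N * cf h y"] conjI)
      show "linear (\<lambda>y. real N * cf h y)"
        by (rule linearI) (auto simp: linear_add[OF cflin] linear_scale[OF cflin] algebra_simps)
      have hh: "cf h h = 1" using cfB h H_def by auto
      show "(\<lambda>y. real N * cf h y) \<noteq> (\<lambda>x. 0)"
      proof
        assume "(\<lambda>y. real N * cf h y) = (\<lambda>x. 0)"
        then have "real N * cf h h = 0" by metis
        then show False using hh unfolding N_def by simp
      qed
      show "\<forall>x\<in>G. real N * cf h x \<in> \<int>" using key by blast
    qed
  qed
qed

end

lemma closure_add_closed:
  fixes T :: "'a::real_normed_vector set"
  assumes "\<And>x y. x \<in> T \<Longrightarrow> y \<in> T \<Longrightarrow> x + y \<in> T" "x \<in> closure T" "y \<in> closure T"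
  shows "x + y \<in> closure T"
proof -
  obtain f where f: "\<forall>n. f n \<in> T" "f \<longlonglongrightarrow> x" using assms(2) closure_sequential by blast
  obtain g where g: "\<forall>n. g n \<in> T" "g \<longlonglongrightarrow> y" using assms(3) closure_sequential by blast
  have "(\<lambda>n. f n + g n) \<longlonglongrightarrow> x + y" by (intro tendsto_add f g)
  then show ?thesis unfolding closure_sequential
    by (intro exI[of _ "\<lambda>n. f n + g n"]) (use assms(1) f g in auto)
qed

lemma S0_add:
  fixes A :: "'a::real_vector set"
  shows "x \<in> insert 0 (add_subsemigroup_gen A) \<Longrightarrow> y \<in> insert 0 (add_subsemigroup_gen A)
   \<Longrightarrow> x + y \<in> insert 0 (add_subsemigroup_gen A)"
proof -
  assume x: "x \<in> insert 0 (add_subsemigroup_gen A)" and y: "y \<in> insert 0 (add_subsemigroup_gen A)"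
  show ?thesis
  proof (cases "x = 0")
    case True then show ?thesis using y by simp
  next
    case False
    then have xs: "x \<in> add_subsemigroup_gen A" using x by simp
    show ?thesis
    proof (cases "y = 0")
      case True then show ?thesis using x by simp
    next
      case False
      then have "y \<in> add_subsemigroup_gen A" using y by simp
      then show ?thesis using xs add_subsemigroup_gen.add by blast
    qed
  qed
qed

lemma S0_nat:
  fixes A :: "'a::real_vector set"
  assumes "b \<in> A"
  shows "of_nat k *\<^sub>R b \<in> insert 0 (add_subsemigroup_gen A)"
proof (induction k)
  case 0 then show ?case by simp
next
  case (Suc k)
  have e: "of_nat (Suc k) *\<^sub>R b = of_nat k *\<^sub>R b + b" by (simp add: scaleR_add_left)
  have bin: "b \<in> insert 0 (add_subsemigroup_gen A)" using assms add_subsemigroup_gen.gen by blast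
  show ?case unfolding e by (rule S0_add[OF Suc.IH bin])
qed

lemma S0_sum:
  fixes A :: "'a::real_vector set"
  assumes "finite I" "\<And>i. i \<in> I \<Longrightarrow> g i \<in> A" "\<And>i. i \<in> I \<Longrightarrow> c i \<ge> 0"
  shows "(\<Sum>i\<in>I. of_int (c i) *\<^sub>R g i) \<in> insert 0 (add_subsemigroup_gen A)"
  using assms
proof (induction I rule: finite_induct)
  case empty then show ?case by simp
next
  case (insert i I)
  have ce: "of_int (c i) = (of_nat (nat (c i)) :: real)" using insert.prems(2)[of i] by simp
  have "of_int (c i) *\<^sub>R g i \<in> insert 0 (add_subsemigroup_gen A)"
    unfolding ce by (rule S0_nat) (rule insert.prems(1), simp)
  moreover have "(\<Sum>i\<in>I. of_int (c i) *\<^sub>R g i) \<in> insert 0 (add_subsemigroup_gen A)"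
    by (rule insert.IH) (use insert.prems in auto)
  moreover have "(\<Sum>i\<in>insert i I. of_int (c i) *\<^sub>R g i) = of_int (c i) *\<^sub>R g i + (\<Sum>i\<in>I. of_int (c i) *\<^sub>R g i)"
    using insert.hyps by simp
  ultimately show ?case by (simp only:) (rule S0_add)
qed

lemma neg_in_closure:
  fixes A :: "'a::euclidean_space set"
  assumes finA: "finite A" and aA: "a \<in> A" and nu: "\<And>b. b \<in> A \<Longrightarrow> \<nu> b \<ge> 0"
    and eq: "-a = (\<Sum>b\<in>A. \<nu> b *\<^sub>R b)"
  shows "-a \<in> closure (insert 0 (add_subsemigroup_gen A))"
proof -
  define n where "n = card A"
  obtain f where f: "bij_betw f {..<n} A"
    using ex_bij_betw_nat_finite[OF finA] n_def by (metis atLeast0LessThan)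
  have fA: "i < n \<Longrightarrow> f i \<in> A" for i using f by (auto dest: bij_betwE)
  define \<theta> where "\<theta> i = \<nu> (f i)" for i
  have th0: "i < n \<Longrightarrow> 0 \<le> \<theta> i" for i using nu fA \<theta>_def by auto
  have sumeq: "-a = (\<Sum>i<n. \<theta> i *\<^sub>R f i)"
    unfolding eq \<theta>_def using sum.reindex_bij_betw[OF f, of "\<lambda>b. \<nu> b *\<^sub>R b"] by simp
  define K where "K = (\<Sum>i<n. norm (f i))"
  have K0: "K \<ge> 0" unfolding K_def by (intro sum_nonneg) auto
  show ?thesis unfolding closure_approachable
  proof (intro allI impI)
    fix e :: real assume e: "e > 0"
    obtain M :: nat where M: "K / e < real M" using reals_Archimedean2 by blast
    define N where "N = Suc M"
    have N0: "N > 0" by (simp add: N_def)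
    have KN: "K / real N < e"
    proof -
      have "K < e * real N" using M e by (simp add: N_def field_simps)
      then show ?thesis using N0 by (simp add: field_simps)
    qed
    obtain q p where q: "0 < q" and pq: "\<And>i. i < n \<Longrightarrow> \<bar>of_int q * \<theta> i - of_int (p i)\<bar> < 1 / N"
      using Dirichlet_approx_simult[OF N0, where \<theta>=\<theta> and n=n] by blast
    have p0: "p i \<ge> 0" if "i < n" for i
    proof -
      have "of_int q * \<theta> i \<ge> 0" using q th0[OF that] by simp
      moreover have "1 / real N \<le> 1" using N0 by simp
      ultimately have "of_int (p i) > (-1::real)" using pq[OF that] by linarith
      then show ?thesis by linarith
    qed
    define z where "z = (\<Sum>i<n. of_int (p i) *\<^sub>R f i) + of_int (q - 1) *\<^sub>R a"
    have zin: "z \<in> insert 0 (add_subsemigroup_gen A)"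
    proof -
      have qe: "of_int (q - 1) = (of_nat (nat (q - 1)) :: real)" using q by simp
      have "(\<Sum>i<n. of_int (p i) *\<^sub>R f i) \<in> insert 0 (add_subsemigroup_gen A)"
        by (rule S0_sum) (use fA p0 in auto)
      moreover have "of_int (q - 1) *\<^sub>R a \<in> insert 0 (add_subsemigroup_gen A)"
        unfolding qe by (rule S0_nat[OF aA])
      ultimately show ?thesis unfolding z_def by (rule S0_add)
    qed
    have "z - (-a) = (\<Sum>i<n. of_int (p i) *\<^sub>R f i) + of_int q *\<^sub>R a"
      unfolding z_def by (simp add: algebra_simps)
    also have "of_int q *\<^sub>R a = - (\<Sum>i<n. (of_int q * \<theta> i) *\<^sub>R f i)"
    proof -
      have "a = - (\<Sum>i<n. \<theta> i *\<^sub>R f i)" using sumeq by (metis minus_minus)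
      then show ?thesis by (simp add: scaleR_sum_right)
    qed
    also have "(\<Sum>i<n. of_int (p i) *\<^sub>R f i) + - (\<Sum>i<n. (of_int q * \<theta> i) *\<^sub>R f i)
        = (\<Sum>i<n. (of_int (p i) - of_int q * \<theta> i) *\<^sub>R f i)"
      by (simp add: sum_subtractf scaleR_diff_left)
    finally have zd: "z - (-a) = (\<Sum>i<n. (of_int (p i) - of_int q * \<theta> i) *\<^sub>R f i)" .
    have "norm (z - (-a)) \<le> (\<Sum>i<n. norm ((of_int (p i) - of_int q * \<theta> i) *\<^sub>R f i))"
      unfolding zd by (rule norm_sum)
    also have "\<dots> \<le> (\<Sum>i<n. (1 / real N) * norm (f i))"
    proof (rule sum_mono)
      fix i assume "i \<in> {..<n}"
      then have "\<bar>of_int (p i) - of_int q * \<theta> i\<bar> \<le> 1 / real N" using pq[of i] by auto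
      then have "\<bar>of_int (p i) - of_int q * \<theta> i\<bar> * norm (f i) \<le> (1 / real N) * norm (f i)"
        by (rule mult_right_mono) simp
      then show "norm ((of_int (p i) - of_int q * \<theta> i) *\<^sub>R f i) \<le> (1 / real N) * norm (f i)"
        by simp
    qed
    also have "\<dots> = K / real N" unfolding K_def by (simp add: sum_divide_distrib)
    finally have "norm (z - (-a)) < e" using KN by linarith
    then show "\<exists>y\<in>insert 0 (add_subsemigroup_gen A). dist y (-a) < e"
      using zin unfolding dist_norm by blast
  qed
qed

lemma rev_dir:
  fixes A :: "'a::euclidean_space set"
  assumes finA: "finite A" and int0: "0 \<in> interior (convex hull A)"
    and lb: "\<forall>l :: 'a \<Rightarrow> real. linear l \<and> l ` A \<subseteq> \<int> \<longrightarrow> l = (\<lambda>x. 0)"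
  shows "closure (add_subsemigroup_gen A) = UNIV"
proof (rule ccontr)
  assume nU: "closure (add_subsemigroup_gen A) \<noteq> UNIV"
  define S where "S = add_subsemigroup_gen A"
  define G where "G = closure S"
  have AS: "A \<subseteq> S" unfolding S_def using add_subsemigroup_gen.gen by blast
  have SG: "S \<subseteq> G" unfolding G_def by (rule closure_subset)
  have Sadd: "x \<in> S \<Longrightarrow> y \<in> S \<Longrightarrow> x + y \<in> S" for x y
    unfolding S_def by (rule add_subsemigroup_gen.add)
  have addG: "x \<in> G \<Longrightarrow> y \<in> G \<Longrightarrow> x + y \<in> G" for x y
    unfolding G_def by (rule closure_add_closed[OF Sadd])
  obtain \<epsilon> where \<epsilon>: "\<epsilon> > 0" "ball 0 \<epsilon> \<subseteq> convex hull A"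
    using int0 mem_interior by blast
  have Ane: "A \<noteq> {}" using int0 by auto
  have negA: "-a \<in> G" if aA: "a \<in> A" for a
  proof (cases "a = 0")
    case True
    have "a \<in> G" using aA AS SG by blast
    then show ?thesis using True by simp
  next
    case False
    define t where "t = \<epsilon> / (2 * norm a)"
    have t0: "t > 0" unfolding t_def using False \<epsilon> by simp
    have "norm (- t *\<^sub>R a) = \<epsilon> / 2" unfolding t_def using False \<epsilon> by simp
    then have "- t *\<^sub>R a \<in> ball 0 \<epsilon>" using \<epsilon> by simp
    then have "- t *\<^sub>R a \<in> convex hull A" using \<epsilon> by blast
    then obtain u where u: "\<forall>x\<in>A. 0 \<le> u x" "sum u A = 1" "(\<Sum>x\<in>A. u x *\<^sub>R x) = - t *\<^sub>R a"
      unfolding convex_hull_finite[OF finA] by blast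
    define \<nu> where "\<nu> b = u b / t" for b
    have nu0: "b \<in> A \<Longrightarrow> \<nu> b \<ge> 0" for b unfolding \<nu>_def using u t0 by simp
    have "(\<Sum>b\<in>A. \<nu> b *\<^sub>R b) = (1 / t) *\<^sub>R (\<Sum>x\<in>A. u x *\<^sub>R x)"
      unfolding \<nu>_def by (simp add: scaleR_sum_right divide_inverse mult.commute)
    also have "\<dots> = -a" using u(3) t0 by simp
    finally have eq: "-a = (\<Sum>b\<in>A. \<nu> b *\<^sub>R b)" by simp
    have "-a \<in> closure (insert 0 (add_subsemigroup_gen A))"
      by (rule neg_in_closure[OF finA aA nu0 eq])
    then have "-a \<in> insert 0 G" unfolding G_def S_def closure_insert .
    then show ?thesis using False by simp
  qed
  have negS: "S \<subseteq> {x. -x \<in> G}" unfolding S_def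
  proof (rule sg_induct_set)
    show "A \<subseteq> {x. - x \<in> G}" using negA by blast
    show "x + y \<in> {x. - x \<in> G}" if "x \<in> {x. - x \<in> G}" "y \<in> {x. - x \<in> G}" for x y
      using addG[of "-x" "-y"] that by (simp add: add.commute)
  qed
  have clG: "closed G" unfolding G_def by simp
  have negG: "-x \<in> G" if xG: "x \<in> G" for x
  proof -
    have "x \<in> closure S" using xG unfolding G_def .
    then obtain f where f: "\<forall>n. f n \<in> S" "f \<longlonglongrightarrow> x" unfolding closure_sequential by blast
    have "\<forall>n. - f n \<in> G" using f(1) negS by blast
    moreover have "(\<lambda>n. - f n) \<longlonglongrightarrow> -x" by (intro tendsto_minus f(2))
    ultimately show ?thesis by (rule closed_sequential_limits[THEN iffD1, OF clG, rule_format, OF conjI])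
  qed
  obtain a where aA: "a \<in> A" using Ane by blast
  have "a + -a \<in> G" using addG[OF _ negA[OF aA]] aA AS SG by blast
  then have zG: "0 \<in> G" by simp
  interpret cgrp G
    by unfold_locales (use clG zG addG negG in auto)
  have "G \<noteq> UNIV" using nU unfolding G_def S_def .
  then obtain l where l: "linear l" "l \<noteq> (\<lambda>x. 0::real)" "\<forall>x\<in>G. l x \<in> \<int>"
    using dual by blast
  have "l ` A \<subseteq> \<int>" using l(3) AS SG by blast
  then show False using lb l(1,2) by blast
qed

theorem corollary4p4:
  fixes A :: "'a::euclidean_space set"
  assumes "finite A"
  shows "closure (add_subsemigroup_gen A) = UNIV \<longleftrightarrow>
           (0 \<in> interior (convex hull A) \<and>
            (\<forall>l :: 'a \<Rightarrow> real. linear l \<and> l ` A \<subseteq> \<int> \<longrightarrow> l = (\<lambda>x. 0)))"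
proof
  assume d: "closure (add_subsemigroup_gen A) = UNIV"
  show "0 \<in> interior (convex hull A) \<and>
            (\<forall>l :: 'a \<Rightarrow> real. linear l \<and> l ` A \<subseteq> \<int> \<longrightarrow> l = (\<lambda>x. 0))"
    using dense_imp_a[OF d] dense_imp_b[OF d] by blast
next
  assume "0 \<in> interior (convex hull A) \<and>
            (\<forall>l :: 'a \<Rightarrow> real. linear l \<and> l ` A \<subseteq> \<int> \<longrightarrow> l = (\<lambda>x. 0))"
  then show "closure (add_subsemigroup_gen A) = UNIV"
    using rev_dir[OF assms] by blast
qed

end
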